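(* For every rooted tree $T_r=(V,E)$, $$f(T_r)\ \ge\ \frac{|V|}{2\,h(T_r)}-\frac{1}{2}.$$
   Context: For a tree $T_r$ rooted at $r$, $h(T_r)$ is the number of vertices on a longest path in $T_r$ starting at $r$ (a single vertex has $h=1$); the empty tree $T_\emptyset$ has $h(T_\emptyset)=0$ and $f(T_\emptyset)=0$. For a vertex $v$, $T_v$ is the subtree rooted at $v$ consisting of $v$ and its descendants. The function $f$ is defined recursively: if $|V(T_r)|\le1$ then $f(T_r)=0$; otherwise let the children of $r$ be $v_1,\dots,v_k$ ordered so that $h(T_{v_1})\ge\dots\ge h(T_{v_k})$, where if the number of children is odd an extra empty tree $T_{v_k}=T_\emptyset$ is appended so that $k$ is even; then $f(T_r)=\max\{\sum_{i=1}^k f(T_{v_i}),\ \sum_{i=1}^{k/2} h(T_{v_{2i}})\}$. *)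

theory Defs
  imports Complex_Main
begin

text \<open>Finite rooted trees (unordered children are represented by a list; the
  order is irrelevant since f sorts the children by height).\<close>
datatype rtree = Node "rtree list"

fun nverts :: "rtree \<Rightarrow> nat" where
  "nverts (Node ts) = 1 + sum_list (map nverts ts)"

fun h :: "rtree \<Rightarrow> nat" where
  "h (Node ts) = 1 + foldr max (map h ts) 0"

text \<open>Heights of the children sorted non-increasingly, padded by the empty
  tree (height 0) if the number of children is odd.\<close>
definition padded_child_heights :: "rtree list \<Rightarrow> nat list" where
  "padded_child_heights ts =
     (let hs = rev (sort (map h ts)) in if odd (length hs) then hs @ [0] else hs)"

text \<open>Sum over i = 1..k/2 of h(T_{v_{2i}}) (1-based indices, i.e. 0-based index 2i+1).\<close>
definition pair_sum :: "rtree list \<Rightarrow> nat" where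
  "pair_sum ts = (let hs = padded_child_heights ts in
                    \<Sum>i<length hs div 2. hs ! (2 * i + 1))"

text \<open>The function f (the padding empty tree contributes f = 0 to the first sum).\<close>
fun f :: "rtree \<Rightarrow> nat" where
  "f (Node ts) = (if ts = [] then 0 else max (sum_list (map f ts)) (pair_sum ts))"

end

theory Submission
  imports Defs
begin

fun ps :: "nat list \<Rightarrow> nat" where
  "ps (a # b # rest) = b + ps rest"
| "ps _ = 0"

lemma ps_sum: "(\<Sum>i<length xs div 2. xs ! (2 * i + 1)) = ps xs"
proof (induction xs rule: ps.induct)
  case (1 a b rest)
  have "(\<Sum>i<length (a # b # rest) div 2. (a # b # rest) ! (2 * i + 1))
      = (\<Sum>i<Suc (length rest div 2). (a # b # rest) ! (2 * i + 1))" by simp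
  also have "\<dots> = b + (\<Sum>i<length rest div 2. (a # b # rest) ! (2 * Suc i + 1))"
    by (subst sum.lessThan_Suc_shift) simp
  also have "\<dots> = b + (\<Sum>i<length rest div 2. rest ! (2 * i + 1))" by simp
  finally show ?case using 1 by simp
qed auto

lemma ps_bound:
  "sorted_wrt (\<ge>) xs \<Longrightarrow> sum_list xs \<le> (case xs of [] \<Rightarrow> 0 | x # _ \<Rightarrow> x) + 2 * ps xs"
proof (induction xs rule: ps.induct)
  case (1 a b rest)
  then have IH: "sum_list rest \<le> (case rest of [] \<Rightarrow> 0 | x # _ \<Rightarrow> x) + 2 * ps rest" by simp
  have "(case rest of [] \<Rightarrow> 0 | x # _ \<Rightarrow> x) \<le> b" using 1(2) by (cases rest) auto
  then show ?case using IH by simp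
qed auto

lemma sum_list_insort: "sum_list (insort (x::nat) xs) = x + sum_list xs"
  by (induction xs) auto

lemma sum_list_sort: "sum_list (sort (xs::nat list)) = sum_list xs"
  by (induction xs) (auto simp: sum_list_insort)

lemma le_foldr_max: "x \<in> set xs \<Longrightarrow> x \<le> foldr max xs (0::nat)"
  by (induction xs) auto

lemma main: "nverts T \<le> h T * (2 * f T + 1)"
proof (induction T)
  case (Node ts)
  show ?case
  proof (cases "ts = []")
    case True then show ?thesis by simp
  next
    case False
    define h1 where "h1 = foldr max (map h ts) 0"
    define F where "F = sum_list (map f ts)"
    define P where "P = pair_sum ts"
    define hs where "hs = rev (sort (map h ts))"
    define pd where "pd = (if odd (length hs) then hs @ [0] else hs)"
    have pdeq: "padded_child_heights ts = pd" unfolding padded_child_heights_def pd_def hs_def by simp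
    have P: "P = ps pd" unfolding P_def pair_sum_def pdeq using ps_sum by simp
    have sw: "sorted_wrt (\<ge>) hs" unfolding hs_def by (simp add: sorted_wrt_rev)
    have swp: "sorted_wrt (\<ge>) pd" unfolding pd_def using sw by (auto simp: sorted_wrt_append)
    have sumpd: "sum_list pd = sum_list (map h ts)"
      unfolding pd_def hs_def by (simp add: sum_list_sort)
    have hd: "(case pd of [] \<Rightarrow> 0 | x # _ \<Rightarrow> x) \<le> h1"
    proof (cases pd)
      case (Cons x r)
      then have "x \<in> set pd" by simp
      then have "x \<in> set (map h ts) \<or> x = 0" unfolding pd_def hs_def by (auto split: if_splits)
      then show ?thesis using Cons le_foldr_max unfolding h1_def by auto
    qed simp
    have S: "sum_list (map h ts) \<le> h1 + 2 * P"
      using ps_bound[OF swp] sumpd hd P by simp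
    have "\<forall>t\<in>set ts. nverts t \<le> 2 * h1 * f t + h t"
    proof
      fix t assume t: "t \<in> set ts"
      have "h t \<le> h1" unfolding h1_def by (rule le_foldr_max) (use t in simp)
      then have a: "h t * (2 * f t) \<le> h1 * (2 * f t)" by (rule mult_le_mono1)
      have b: "nverts t \<le> h t * (2 * f t + 1)" using Node t by blast
      have c: "h t * (2 * f t + 1) = h t * (2 * f t) + h t" by (simp add: algebra_simps)
      have d: "2 * h1 * f t = h1 * (2 * f t)" by simp
      show "nverts t \<le> 2 * h1 * f t + h t" unfolding d using a b c by linarith
    qed
    then have "sum_list (map nverts ts) \<le> sum_list (map (\<lambda>t. 2 * h1 * f t + h t) ts)"
      by (intro sum_list_mono) auto
    also have "\<dots> = 2 * h1 * F + sum_list (map h ts)"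
      unfolding F_def by (simp add: sum_list_addf sum_list_const_mult)
    finally have N: "sum_list (map nverts ts) \<le> 2 * h1 * F + h1 + 2 * P" using S by simp
    have fT: "f (Node ts) = max F P" using False unfolding F_def P_def by simp
    obtain g where g: "g = f (Node ts)" by simp
    have Fg: "F \<le> g" and Pg: "P \<le> g" using fT g by auto
    have a: "h1 * F \<le> h1 * g" using Fg by (rule mult_le_mono2)
    have nv: "nverts (Node ts) = 1 + sum_list (map nverts ts)" by simp
    have hT: "h (Node ts) = 1 + h1" unfolding h1_def by simp
    have e: "(1 + h1) * (2 * g + 1) = 1 + h1 + 2 * g + 2 * (h1 * g)" by (simp add: algebra_simps)
    have e2: "2 * h1 * F = 2 * (h1 * F)" by simp
    have "nverts (Node ts) \<le> (1 + h1) * (2 * g + 1)"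
      unfolding nv e using N a Pg e2 by linarith
    then show ?thesis unfolding hT g .
  qed
qed

lemma h_pos: "h T \<ge> 1" by (cases T) simp

theorem lemma2:
  fixes T :: rtree
  shows "real (f T) \<ge> real (nverts T) / (2 * real (h T)) - 1 / 2"
proof -
  have m: "real (nverts T) \<le> real (h T) * (2 * real (f T) + 1)"
    proof -
    have "real (nverts T) \<le> real (h T * (2 * f T + 1))" using main[of T] by (rule of_nat_mono)
    then show ?thesis by (simp add: algebra_simps)
  qed
  have hp: "real (h T) > 0" using h_pos[of T] by simp
  have "real (nverts T) / (2 * real (h T)) \<le> (real (h T) * (2 * real (f T) + 1)) / (2 * real (h T))"
    using m hp by (intro divide_right_mono) auto
  also have "\<dots> = real (f T) + 1/2" using hp by (simp add: field_simps)
  finally show ?thesis by simp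
qed

end
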